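(* Let $n>p>1$, $X\in\mathbb{R}^{n\times p}$ with rows $x_1^T,\dots,x_n^T$, $Y=(y_1,\dots,y_n)^T$, $p\le h<n$, and assume that for every $(\circ_1,\dots,\circ_{n-1})\in\{+,-\}^{n-1}$ the $(n-1)\times p$ matrix with rows $(x_1\circ_kx_{k+1})^T$, $k=1,\dots,n-1$, has rank $p$. Let $l\in\{2,\dots,p\}$, let $i_1,\dots,i_l\in\{1,\dots,n\}$ be pairwise distinct and $\circ_1,\dots,\circ_{l-1}\in\{+,-\}$. If the system of $l-1$ equations $(x_{i_1}\circ_kx_{i_{k+1}})^T\beta=y_{i_1}\circ_ky_{i_{k+1}}$, $k=1,\dots,l-1$, has rank $l-1$, then there exist $i_{l+1}\in\{1,\dots,n\}\setminus\{i_1,\dots,i_l\}$ and $\circ_l\in\{+,-\}$ such that the system of the $l$ equations $(x_{i_1}\circ_kx_{i_{k+1}})^T\beta=y_{i_1}\circ_ky_{i_{k+1}}$, $k=1,\dots,l$, has rank $l$. Moreover, if some solution $\beta$ of the $(l-1)$-equation system satisfies $r^2_{i_1}(\beta)=r^2_{(h)}(\beta)=r^2_{(h+1)}(\beta)$, then $i_{l+1}$ can be chosen so that there exists $\beta_1\in\mathbb{R}^p$ with $r^2_{i_1}(\beta_1)=\dots=r^2_{i_l}(\beta_1)=r^2_{i_{l+1}}(\beta_1)=r^2_{(h)}(\beta_1)=r^2_{(h+1)}(\beta_1)$.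
   Context: $r_i(\beta)=y_i-x_i^T\beta$; $r^2_{(1)}(\beta)\le\dots\le r^2_{(n)}(\beta)$ are the sorted squared residuals. For $\circ\in\{+,-\}$, $a\circ b$ is $a+b$ or $a-b$. The rank of a linear system means the rank of its coefficient matrix. *)

theory Defs
  imports "HOL-Analysis.Analysis"
begin

definition sop :: "bool \<Rightarrow> 'a::ab_group_add \<Rightarrow> 'a \<Rightarrow> 'a" where
  "sop s a b = (if s then a + b else a - b)"

definition resid :: "(nat \<Rightarrow> real^'p) \<Rightarrow> (nat \<Rightarrow> real) \<Rightarrow> nat \<Rightarrow> real^'p \<Rightarrow> real" where
  "resid x y i \<beta> = y i - x i \<bullet> \<beta>"

definition sq_resid_ord :: "nat \<Rightarrow> (nat \<Rightarrow> real^'p) \<Rightarrow> (nat \<Rightarrow> real) \<Rightarrow> nat \<Rightarrow> real^'p \<Rightarrow> real" where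
  "sq_resid_ord n x y h \<beta> = sort (map (\<lambda>i. (resid x y i \<beta>)\<^sup>2) [1..<n+1]) ! (h - 1)"

definition rows_rank :: "(nat \<Rightarrow> real^'p) \<Rightarrow> nat set \<Rightarrow> nat" where
  "rows_rank r K = dim (span (r ` K))"

end

theory Submission
  imports Defs
begin


lemma len_filter_sort: "length (filter P (sort xs)) = length (filter P (xs::real list))"
  by (simp add: filter_sort)

lemma len_filter_mono:
  "(\<And>a. a \<in> set xs \<Longrightarrow> P a \<Longrightarrow> Q a) \<Longrightarrow> length (filter P xs) \<le> length (filter Q xs)"
  by (induct xs) auto

lemma cnt_less:
  fixes s :: "real list"
  assumes "sorted s" "k < length s" "s!k = w"
  shows "length (filter (\<lambda>v. v < w) s) \<le> k"
proof -
  have "{i. i < length s \<and> s!i < w} \<subseteq> {..<k}"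
  proof
    fix i assume "i \<in> {i. i < length s \<and> s!i < w}"
    then have "i < length s" "s!i < w" by auto
    show "i \<in> {..<k}"
    proof (rule ccontr)
      assume "i \<notin> {..<k}" then have "k \<le> i" by simp
      then have "s!k \<le> s!i" using sorted_nth_mono[OF assms(1)] \<open>i < length s\<close> by blast
      with assms(3) \<open>s!i < w\<close> show False by simp
    qed
  qed
  then have "card {i. i < length s \<and> s!i < w} \<le> k"
    by (metis card_lessThan card_mono finite_lessThan)
  then show ?thesis by (simp add: length_filter_conv_card)
qed

lemma cnt_greater:
  fixes s :: "real list"
  assumes "sorted s" "k < length s" "s!k = w"
  shows "length (filter (\<lambda>v. w < v) s) \<le> length s - 1 - k"
proof -
  have "{i. i < length s \<and> w < s!i} \<subseteq> {Suc k..<length s}"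
  proof
    fix i assume "i \<in> {i. i < length s \<and> w < s!i}"
    then have "i < length s" "w < s!i" by auto
    show "i \<in> {Suc k..<length s}"
    proof (rule ccontr)
      assume "i \<notin> {Suc k..<length s}" then have "i \<le> k" using \<open>i < length s\<close> by simp
      then have "s!i \<le> s!k" using sorted_nth_mono[OF assms(1)] assms(2) by blast
      with assms(3) \<open>w < s!i\<close> show False by simp
    qed
  qed
  then have "card {i. i < length s \<and> w < s!i} \<le> length s - 1 - k"
    by (metis card_atLeastLessThan card_mono finite_atLeastLessThan diff_Suc_eq_diff_pred diff_commute)
  then show ?thesis by (simp add: length_filter_conv_card)
qed

lemma nth_from_cnt:
  fixes s :: "real list"
  assumes "sorted s" "k < length s"
    and "length (filter (\<lambda>v. v < w) s) \<le> k"
    and "length (filter (\<lambda>v. w < v) s) \<le> length s - 1 - k"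
  shows "s!k = w"
proof (rule ccontr)
  assume ne: "s!k \<noteq> w"
  show False
  proof (cases "s!k < w")
    case True
    have "{..k} \<subseteq> {i. i < length s \<and> s!i < w}"
    proof
      fix i assume "i \<in> {..k}" then have "i \<le> k" by simp
      then have "s!i \<le> s!k" using sorted_nth_mono[OF assms(1)] assms(2) by blast
      then show "i \<in> {i. i < length s \<and> s!i < w}" using True \<open>i \<le> k\<close> assms(2) by auto
    qed
    then have "card {..k} \<le> card {i. i < length s \<and> s!i < w}"
      by (intro card_mono) auto
    then show False using assms(3) by (simp add: length_filter_conv_card)
  next
    case False
    then have gt: "w < s!k" using ne by simp
    have "{k..<length s} \<subseteq> {i. i < length s \<and> w < s!i}"
    proof
      fix i assume "i \<in> {k..<length s}" then have "k \<le> i" "i < length s" by auto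
      then have "s!k \<le> s!i" using sorted_nth_mono[OF assms(1)] by blast
      then show "i \<in> {i. i < length s \<and> w < s!i}" using gt \<open>i < length s\<close> by auto
    qed
    then have "card {k..<length s} \<le> card {i. i < length s \<and> w < s!i}"
      by (intro card_mono) auto
    then show False using assms(4) assms(2) by (simp add: length_filter_conv_card)
  qed
qed

lemma lin_root:
  fixes \<rho> \<alpha> t :: real
  assumes "\<alpha> \<noteq> 0" "(\<rho> - \<alpha>*t) * \<rho> \<le> 0" "\<rho> - \<alpha>*t \<noteq> 0"
  shows "\<bar>\<rho>/\<alpha>\<bar> < \<bar>t\<bar>"
proof -
  have "\<bar>\<rho>\<bar> < \<bar>\<alpha>*t\<bar>"
    using assms by (cases "\<rho> \<ge> 0"; cases "\<alpha>*t \<ge> 0") (auto simp: mult_le_0_iff)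
  then show ?thesis using assms(1) by (simp add: abs_mult pos_divide_less_eq mult.commute)
qed


lemma eqsq:
  assumes "sop s (x a) (x b) \<bullet> \<beta> = sop s (y a) (y b)"
  shows "(resid x y b \<beta>)\<^sup>2 = (resid x y a \<beta>)\<^sup>2"
proof (cases s)
  case True
  then have "resid x y b \<beta> = - resid x y a \<beta>" using assms
    by (simp add: sop_def resid_def inner_add_left algebra_simps)
  then show ?thesis by simp
next
  case False
  then have "resid x y b \<beta> = resid x y a \<beta>" using assms
    by (simp add: sop_def resid_def inner_diff_left algebra_simps)
  then show ?thesis by simp
qed

lemma sign_prod:
  fixes P0 P1 Q0 Q1 :: real
  assumes "P1 \<noteq> 0 \<Longrightarrow> P1*P0 > 0" "Q1 \<noteq> 0 \<Longrightarrow> Q1*Q0 > 0"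
  shows "P1*Q1 < 0 \<Longrightarrow> P0*Q0 < 0" and "P1*Q1 > 0 \<Longrightarrow> P0*Q0 > 0"
  using assms by (auto simp: mult_less_0_iff zero_less_mult_iff)

lemma resid_line:
  "resid x y m (\<beta>0 + t *\<^sub>R d) = resid x y m \<beta>0 - t * (x m \<bullet> d)"
  by (simp add: resid_def inner_add_right algebra_simps)



theorem lemma5:
  fixes n h l :: nat and x :: "nat \<Rightarrow> real^'p" and y :: "nat \<Rightarrow> real"
    and i :: "nat \<Rightarrow> nat" and c :: "nat \<Rightarrow> bool"
  assumes "CARD('p) < n" and "1 < CARD('p)"
    and "CARD('p) \<le> h" and "h < n"
    and "\<forall>s :: nat \<Rightarrow> bool.
           rows_rank (\<lambda>k. sop (s k) (x 1) (x (k+1))) {1..n-1} = CARD('p)"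
    and "2 \<le> l" and "l \<le> CARD('p)"
    and "\<forall>k\<in>{1..l}. i k \<in> {1..n}" and "inj_on i {1..l}"
    and "rows_rank (\<lambda>k. sop (c k) (x (i 1)) (x (i (k+1)))) {1..l-1} = l - 1"
  shows "\<exists>j\<in>{1..n} - i ` {1..l}. \<exists>b.
           rows_rank (\<lambda>k. sop ((c(l := b)) k) (x (i 1)) (x ((i(l+1 := j)) (k+1)))) {1..l} = l
         \<and> ((\<exists>\<beta>. (\<forall>k\<in>{1..l-1}. sop (c k) (x (i 1)) (x (i (k+1))) \<bullet> \<beta>
                                   = sop (c k) (y (i 1)) (y (i (k+1))))
                  \<and> (resid x y (i 1) \<beta>)\<^sup>2 = sq_resid_ord n x y h \<beta>
                  \<and> sq_resid_ord n x y h \<beta> = sq_resid_ord n x y (h+1) \<beta>)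
            \<longrightarrow> (\<exists>\<beta>1. (\<forall>k\<in>{1..l}. (resid x y (i k) \<beta>1)\<^sup>2 = (resid x y (i 1) \<beta>1)\<^sup>2)
                     \<and> (resid x y j \<beta>1)\<^sup>2 = (resid x y (i 1) \<beta>1)\<^sup>2
                     \<and> (resid x y (i 1) \<beta>1)\<^sup>2 = sq_resid_ord n x y h \<beta>1
                     \<and> sq_resid_ord n x y h \<beta>1 = sq_resid_ord n x y (h+1) \<beta>1))"
proof -
  define R where "R k = sop (c k) (x (i 1)) (x (i (k+1)))" for k
  define V where "V = span (R ` {1..l-1})"
  define I where "I = i ` {1..l}"
  define M where "M = {1..n} - I"
  have dimV: "dim V = l - 1" using assms(10) by (simp add: V_def R_def rows_rank_def)
  have RV: "R k \<in> V" if "k \<in> {1..l-1}" for k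
    unfolding V_def using that by (intro span_base) auto
  have xV: "x (i k) \<in> V" if "x (i 1) \<in> V" "k \<in> {1..l}" for k
  proof (cases "k = 1")
    case True then show ?thesis using that by simp
  next
    case False
    then have k1: "k - 1 \<in> {1..l-1}" "k - 1 + 1 = k" using that(2) by auto
    have r: "R (k-1) \<in> V" using RV k1 by blast
    show ?thesis
    proof (cases "c (k-1)")
      case True
      then have "x (i k) = R (k-1) - x (i 1)" using k1 by (simp add: R_def sop_def)
      then show ?thesis using r that(1) unfolding V_def by (simp add: span_diff)
    next
      case False
      then have "x (i k) = x (i 1) - R (k-1)" using k1 by (simp add: R_def sop_def)
      then show ?thesis using r that(1) unfolding V_def by (simp add: span_diff)
    qed
  qed
  have IM: "I \<subseteq> {1..n}" using assms(8) by (auto simp: I_def)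
  have finM: "finite M" by (simp add: M_def)
  have Mne: "M \<noteq> {}"
  proof
    assume "M = {}"
    then have "{1..n} \<subseteq> I" by (auto simp: M_def)
    then have "card {1..n} \<le> card I" by (intro card_mono) (auto simp: I_def)
    also have "card I \<le> l" unfolding I_def using card_image_le[of "{1..l}" i] by simp
    finally show False using assms(1) assms(7) by simp
  qed
  have ex_m: "\<exists>m\<in>M. x (i 1) \<notin> V \<or> x m \<notin> V"
  proof (rule ccontr)
    assume "\<not> ?thesis"
    then have allV: "\<forall>m\<in>M. x (i 1) \<in> V \<and> x m \<in> V" by blast
    then have xi1: "x (i 1) \<in> V" using Mne by blast
    have allx: "x m \<in> V" if "m \<in> {1..n}" for m
    proof (cases "m \<in> I")
      case True then obtain k where "k \<in> {1..l}" "m = i k" by (auto simp: I_def)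
      then show ?thesis using xV xi1 by blast
    next
      case False then show ?thesis using allV that by (auto simp: M_def)
    qed
    let ?rows = "(\<lambda>k. sop True (x 1) (x (k+1))) ` {1..n-1}"
    have "?rows \<subseteq> V"
    proof
      fix v assume "v \<in> ?rows"
      then obtain k where k: "k \<in> {1..n-1}" "v = x 1 + x (k+1)" by (auto simp: sop_def)
      have "x 1 \<in> V" "x (k+1) \<in> V" using allx k assms(1) by auto
      then show "v \<in> V" using k unfolding V_def by (simp add: span_add)
    qed
    then have "span ?rows \<subseteq> V" unfolding V_def by (simp add: span_minimal)
    then have "dim (span ?rows) \<le> dim V" by (rule dim_subset)
    moreover have "dim (span ?rows) = CARD('p)"
      using assms(5)[rule_format, of "\<lambda>_. True"] by (simp add: rows_rank_def)
    ultimately show False using dimV assms(7) assms(6) by simp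
  qed
  have RK: "\<exists>b. sop b (x (i 1)) (x j) \<notin> V" if "\<not> (x (i 1) \<in> V \<and> x j \<in> V)" for j
  proof (rule ccontr)
    assume "\<not> ?thesis"
    then have a: "x (i 1) + x j \<in> V" and b: "x (i 1) - x j \<in> V"
      using sop_def by metis+
    have "x (i 1) = (1/2) *\<^sub>R ((x (i 1) + x j) + (x (i 1) - x j))"
      by (simp add: vec_eq_iff algebra_simps)
    then have "x (i 1) \<in> V" using a b unfolding V_def by (metis span_add span_scale)
    moreover have "x j = (1/2) *\<^sub>R ((x (i 1) + x j) - (x (i 1) - x j))"
      by (simp add: vec_eq_iff algebra_simps)
    then have "x j \<in> V" using a b unfolding V_def by (metis span_diff span_scale)
    ultimately show False using that by blast
  qed
  have rank: "rows_rank (\<lambda>k. sop ((c(l := b)) k) (x (i 1)) (x ((i(l+1 := j)) (k+1)))) {1..l} = l"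
    if "sop b (x (i 1)) (x j) \<notin> V" for b j
  proof -
    have "(\<lambda>k. sop ((c(l := b)) k) (x (i 1)) (x ((i(l+1 := j)) (k+1)))) ` {1..l}
          = insert (sop b (x (i 1)) (x j)) (R ` {1..l-1})"
    proof -
      have e: "{1..l} = insert l {1..l-1}" using assms(6) by auto
      have "(\<lambda>k. sop ((c(l := b)) k) (x (i 1)) (x ((i(l+1 := j)) (k+1)))) ` {1..l-1} = R ` {1..l-1}"
        by (intro image_cong) (auto simp: R_def)
      then show ?thesis by (subst e) simp
    qed
    then show ?thesis using that dimV unfolding rows_rank_def V_def
      using assms(6) by (simp add: dim_insert)
  qed
  let ?P = "\<exists>\<beta>. (\<forall>k\<in>{1..l-1}. sop (c k) (x (i 1)) (x (i (k+1))) \<bullet> \<beta>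
                                   = sop (c k) (y (i 1)) (y (i (k+1))))
                  \<and> (resid x y (i 1) \<beta>)\<^sup>2 = sq_resid_ord n x y h \<beta>
                  \<and> sq_resid_ord n x y h \<beta> = sq_resid_ord n x y (h+1) \<beta>"
  let ?Q = "\<lambda>j. \<exists>\<beta>1. (\<forall>k\<in>{1..l}. (resid x y (i k) \<beta>1)\<^sup>2 = (resid x y (i 1) \<beta>1)\<^sup>2)
                     \<and> (resid x y j \<beta>1)\<^sup>2 = (resid x y (i 1) \<beta>1)\<^sup>2
                     \<and> (resid x y (i 1) \<beta>1)\<^sup>2 = sq_resid_ord n x y h \<beta>1
                     \<and> sq_resid_ord n x y h \<beta>1 = sq_resid_ord n x y (h+1) \<beta>1"
  have main: "\<exists>j\<in>M. \<not> (x (i 1) \<in> V \<and> x j \<in> V) \<and> (?P \<longrightarrow> ?Q j)"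
  proof (cases ?P)
    case False
    then show ?thesis using ex_m by blast
  next
    case True
    then obtain \<beta>0 where eq0: "\<forall>k\<in>{1..l-1}. R k \<bullet> \<beta>0 = sop (c k) (y (i 1)) (y (i (k+1)))"
      and o1: "(resid x y (i 1) \<beta>0)\<^sup>2 = sq_resid_ord n x y h \<beta>0"
      and o2: "sq_resid_ord n x y h \<beta>0 = sq_resid_ord n x y (h+1) \<beta>0"
      unfolding R_def by blast
    obtain m where mM: "m \<in> M" and mV: "x (i 1) \<notin> V \<or> x m \<notin> V" using ex_m by blast
    define u where "u = (if x (i 1) \<notin> V then x (i 1) else x m)"
    have uV: "u \<notin> V" using mV by (auto simp: u_def)
    obtain yy d where yy: "yy \<in> V" and dV0: "\<And>w. w \<in> V \<Longrightarrow> orthogonal d w" and ud: "u = yy + d"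
      using orthogonal_subspace_decomp_exists[of "R ` {1..l-1}" u] unfolding V_def by metis
    have dV: "w \<bullet> d = 0" if "w \<in> V" for w
      using dV0[OF that] by (simp add: orthogonal_def inner_commute)
    have "d \<noteq> 0" using uV yy ud by auto
    then have "u \<bullet> d \<noteq> 0" using ud dV[OF yy] by (simp add: inner_add_left)
    then have ad: "x (i 1) \<bullet> d \<noteq> 0 \<or> x m \<bullet> d \<noteq> 0" by (auto simp: u_def split: if_splits)
    define a where "a k = x k \<bullet> d" for k
    define r0 where "r0 k = resid x y k \<beta>0" for k
    define sg :: "bool \<Rightarrow> real" where "sg \<sigma> = (if \<sigma> then 1 else -1)" for \<sigma>
    define \<rho> where "\<rho> k \<sigma> = r0 k + sg \<sigma> * r0 (i 1)" for k \<sigma>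
    define \<alpha> where "\<alpha> k \<sigma> = a k + sg \<sigma> * a (i 1)" for k \<sigma>
    define Z where "Z = {t. \<exists>k\<in>M. \<exists>\<sigma>. \<alpha> k \<sigma> \<noteq> 0 \<and> t = \<rho> k \<sigma> / \<alpha> k \<sigma>}"
    have finZ: "finite Z"
    proof -
      have "Z \<subseteq> (\<lambda>(k,\<sigma>). \<rho> k \<sigma> / \<alpha> k \<sigma>) ` (M \<times> UNIV)" by (auto simp: Z_def)
      moreover have "finite (M \<times> (UNIV::bool set))" using finM by simp
      ultimately show ?thesis by (meson finite_imageI finite_subset)
    qed
    have "\<exists>\<sigma>. \<alpha> m \<sigma> \<noteq> 0"
    proof (rule ccontr)
      assume "\<not> ?thesis"
      then have "\<alpha> m True = 0" "\<alpha> m False = 0" by auto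
      then show False using ad by (simp add: \<alpha>_def sg_def a_def)
    qed
    then have Zne: "Z \<noteq> {}" using mM by (auto simp: Z_def)
    define \<mu> where "\<mu> = Min (abs ` Z)"
    have "\<mu> \<in> abs ` Z" unfolding \<mu>_def using finZ Zne by (intro Min_in) auto
    then obtain t1 where t1Z: "t1 \<in> Z" and t1mu: "\<bar>t1\<bar> = \<mu>" by auto
    have t1min: "\<bar>t1\<bar> \<le> \<bar>t\<bar>" if "t \<in> Z" for t
    proof -
      have "\<mu> \<le> \<bar>t\<bar>" unfolding \<mu>_def using finZ that by (intro Min_le) auto
      then show ?thesis using t1mu by simp
    qed
    from t1Z obtain j \<sigma>j where jM: "j \<in> M" and aj: "\<alpha> j \<sigma>j \<noteq> 0" and t1e: "t1 = \<rho> j \<sigma>j / \<alpha> j \<sigma>j"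
      by (auto simp: Z_def)
    define \<beta>1 where "\<beta>1 = \<beta>0 + t1 *\<^sub>R d"
    have res1: "resid x y k \<beta>1 = r0 k - t1 * a k" for k
      by (simp add: \<beta>1_def resid_line r0_def a_def)
    have L1: "resid x y k \<beta>1 + sg \<sigma> * resid x y (i 1) \<beta>1 = \<rho> k \<sigma> - \<alpha> k \<sigma> * t1" for k \<sigma>
      by (simp add: res1 \<rho>_def \<alpha>_def algebra_simps)
    have L0: "r0 k + sg \<sigma> * r0 (i 1) = \<rho> k \<sigma>" for k \<sigma> by (simp add: \<rho>_def)
    have sgn: "(\<rho> k \<sigma> - \<alpha> k \<sigma> * t1) * \<rho> k \<sigma> > 0" if "k \<in> M" "\<rho> k \<sigma> - \<alpha> k \<sigma> * t1 \<noteq> 0" for k \<sigma>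
    proof (cases "\<alpha> k \<sigma> = 0")
      case True then show ?thesis using that by (auto simp: zero_less_mult_iff linorder_neq_iff)
    next
      case False
      then have "\<rho> k \<sigma> / \<alpha> k \<sigma> \<in> Z" using that(1) by (auto simp: Z_def)
      then have "\<bar>t1\<bar> \<le> \<bar>\<rho> k \<sigma> / \<alpha> k \<sigma>\<bar>" by (rule t1min)
      moreover have "(\<rho> k \<sigma> - \<alpha> k \<sigma> * t1) * \<rho> k \<sigma> \<le> 0 \<longrightarrow> \<bar>\<rho> k \<sigma> / \<alpha> k \<sigma>\<bar> < \<bar>t1\<bar>"
        using lin_root[OF False _ that(2)] by blast
      ultimately show ?thesis by linarith
    qed
    have sq_fact: "(A::real)\<^sup>2 - B\<^sup>2 = (A + sg True * B) * (A + sg False * B)" for A B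
      by (simp add: sg_def power2_eq_square algebra_simps)
    have cmpM: "((resid x y k \<beta>1)\<^sup>2 < (resid x y (i 1) \<beta>1)\<^sup>2 \<longrightarrow> (r0 k)\<^sup>2 < (r0 (i 1))\<^sup>2)
              \<and> ((resid x y k \<beta>1)\<^sup>2 > (resid x y (i 1) \<beta>1)\<^sup>2 \<longrightarrow> (r0 k)\<^sup>2 > (r0 (i 1))\<^sup>2)"
      if "k \<in> M" for k
    proof -
      let ?P1 = "\<rho> k True - \<alpha> k True * t1"
      let ?Q1 = "\<rho> k False - \<alpha> k False * t1"
      let ?P0 = "\<rho> k True"
      let ?Q0 = "\<rho> k False"
      have hp: "?P1 \<noteq> 0 \<Longrightarrow> ?P1 * ?P0 > 0" by (rule sgn[OF that])
      have hq: "?Q1 \<noteq> 0 \<Longrightarrow> ?Q1 * ?Q0 > 0" by (rule sgn[OF that])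
      have e1: "(resid x y k \<beta>1)\<^sup>2 - (resid x y (i 1) \<beta>1)\<^sup>2 = ?P1 * ?Q1"
        unfolding L1[symmetric] by (rule sq_fact)
      have e0: "(r0 k)\<^sup>2 - (r0 (i 1))\<^sup>2 = ?P0 * ?Q0"
        unfolding L0[symmetric] by (rule sq_fact)
      show ?thesis
      proof (intro conjI impI)
        assume "(resid x y k \<beta>1)\<^sup>2 < (resid x y (i 1) \<beta>1)\<^sup>2"
        then have "?P1 * ?Q1 < 0" using e1 by linarith
        from sign_prod(1)[of ?P1 ?P0 ?Q1 ?Q0, OF hp hq this] have "?P0 * ?Q0 < 0" .
        then show "(r0 k)\<^sup>2 < (r0 (i 1))\<^sup>2" using e0 by linarith
      next
        assume "(resid x y k \<beta>1)\<^sup>2 > (resid x y (i 1) \<beta>1)\<^sup>2"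
        then have "?P1 * ?Q1 > 0" using e1 by linarith
        from sign_prod(2)[of ?P1 ?P0 ?Q1 ?Q0, OF hp hq this] have "?P0 * ?Q0 > 0" .
        then show "(r0 k)\<^sup>2 > (r0 (i 1))\<^sup>2" using e0 by linarith
      qed
    qed
    have eqline: "\<forall>k\<in>{1..l-1}. R k \<bullet> \<beta>1 = sop (c k) (y (i 1)) (y (i (k+1)))"
      using eq0 RV dV by (simp add: \<beta>1_def inner_add_right)
    have Ieq: "(resid x y (i k) \<beta>) \<^sup>2 = (resid x y (i 1) \<beta>)\<^sup>2"
      if "k \<in> {1..l}" "\<forall>k\<in>{1..l-1}. R k \<bullet> \<beta> = sop (c k) (y (i 1)) (y (i (k+1)))" for k \<beta>
    proof (cases "k = 1")
      case True then show ?thesis by simp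
    next
      case False
      then have k1: "k - 1 \<in> {1..l-1}" "k - 1 + 1 = k" using that(1) by auto
      then show ?thesis using that(2) eqsq[of "c (k-1)" x "i 1" "i k" \<beta> y] unfolding R_def by force
    qed
    have tie: "(resid x y j \<beta>1)\<^sup>2 = (resid x y (i 1) \<beta>1)\<^sup>2"
    proof -
      have "resid x y j \<beta>1 + sg \<sigma>j * resid x y (i 1) \<beta>1 = 0"
        unfolding L1 using aj t1e by simp
      then have "resid x y j \<beta>1 = - sg \<sigma>j * resid x y (i 1) \<beta>1" by simp
      then show ?thesis by (simp add: sg_def power2_eq_square)
    qed
    have jrank: "\<not> (x (i 1) \<in> V \<and> x j \<in> V)"
    proof
      assume "x (i 1) \<in> V \<and> x j \<in> V"
      then have "a (i 1) = 0" "a j = 0" using dV by (auto simp: a_def)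
      then show False using aj by (simp add: \<alpha>_def)
    qed
    define Lst where "Lst \<beta> = map (\<lambda>k. (resid x y k \<beta>)\<^sup>2) [1..<n+1]" for \<beta>
    have sqo: "sq_resid_ord n x y hh \<beta> = sort (Lst \<beta>) ! (hh - 1)" for hh \<beta>
      by (simp add: sq_resid_ord_def Lst_def)
    have lenL: "length (sort (Lst \<beta>)) = n" for \<beta> by (simp add: Lst_def)
    define w0 where "w0 = (r0 (i 1))\<^sup>2"
    define w1 where "w1 = (resid x y (i 1) \<beta>1)\<^sup>2"
    have hpos: "1 \<le> h" using assms(2) assms(3) by simp
    have s0a: "sort (Lst \<beta>0) ! (h-1) = w0" using o1 by (simp add: sqo w0_def r0_def)
    have s0b: "sort (Lst \<beta>0) ! h = w0" using o1 o2 by (simp add: sqo w0_def r0_def)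
    have cl0: "length (filter (\<lambda>v. v < w0) (sort (Lst \<beta>0))) \<le> h - 1"
      using cnt_less[OF sorted_sort _ s0a] lenL assms(4) by simp
    have cg0: "length (filter (\<lambda>v. w0 < v) (sort (Lst \<beta>0))) \<le> n - 1 - h"
      using cnt_greater[OF sorted_sort _ s0b] lenL assms(4) by simp
    have ptw: "k \<in> {1..n} \<Longrightarrow> ((resid x y k \<beta>1)\<^sup>2 < w1 \<longrightarrow> (r0 k)\<^sup>2 < w0)
             \<and> (w1 < (resid x y k \<beta>1)\<^sup>2 \<longrightarrow> w0 < (r0 k)\<^sup>2)" for k
    proof -
      assume k: "k \<in> {1..n}"
      show ?thesis
      proof (cases "k \<in> I")
        case True
        then obtain q where q: "q \<in> {1..l}" and kq: "k = i q" by (auto simp: I_def)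
        have "(resid x y (i q) \<beta>1)\<^sup>2 = (resid x y (i 1) \<beta>1)\<^sup>2" by (rule Ieq[OF q eqline])
        then have "(resid x y k \<beta>1)\<^sup>2 = w1" by (simp add: w1_def kq)
        then show ?thesis by simp
      next
        case False
        then have "k \<in> M" using k by (simp add: M_def)
        then show ?thesis using cmpM[of k] by (simp add: w0_def w1_def)
      qed
    qed
    have cl1: "length (filter (\<lambda>v. v < w1) (sort (Lst \<beta>1))) \<le> h - 1"
    proof -
      have "length (filter (\<lambda>v. v < w1) (sort (Lst \<beta>1)))
          = length (filter (\<lambda>k. (resid x y k \<beta>1)\<^sup>2 < w1) [1..<n+1])"
        by (simp add: len_filter_sort Lst_def filter_map o_def)
      also have "\<dots> \<le> length (filter (\<lambda>k. (r0 k)\<^sup>2 < w0) [1..<n+1])"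
        by (rule len_filter_mono) (use ptw in auto)
      also have "\<dots> = length (filter (\<lambda>v. v < w0) (sort (Lst \<beta>0)))"
        by (simp add: len_filter_sort Lst_def filter_map o_def r0_def)
      finally show ?thesis using cl0 by simp
    qed
    have cg1: "length (filter (\<lambda>v. w1 < v) (sort (Lst \<beta>1))) \<le> n - 1 - h"
    proof -
      have "length (filter (\<lambda>v. w1 < v) (sort (Lst \<beta>1)))
          = length (filter (\<lambda>k. w1 < (resid x y k \<beta>1)\<^sup>2) [1..<n+1])"
        by (simp add: len_filter_sort Lst_def filter_map o_def)
      also have "\<dots> \<le> length (filter (\<lambda>k. w0 < (r0 k)\<^sup>2) [1..<n+1])"
        by (rule len_filter_mono) (use ptw in auto)
      also have "\<dots> = length (filter (\<lambda>v. w0 < v) (sort (Lst \<beta>0)))"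
        by (simp add: len_filter_sort Lst_def filter_map o_def r0_def)
      finally show ?thesis using cg0 by simp
    qed
    have s1a: "sort (Lst \<beta>1) ! (h-1) = w1"
      by (rule nth_from_cnt[OF sorted_sort]) (use cl1 cg1 lenL assms(4) hpos in auto)
    have s1b: "sort (Lst \<beta>1) ! h = w1"
      by (rule nth_from_cnt[OF sorted_sort]) (use cl1 cg1 lenL assms(4) hpos in auto)
    have "?Q j"
    proof (intro exI[of _ \<beta>1] conjI)
      show "\<forall>k\<in>{1..l}. (resid x y (i k) \<beta>1)\<^sup>2 = (resid x y (i 1) \<beta>1)\<^sup>2"
        using Ieq[OF _ eqline] by blast
      show "(resid x y j \<beta>1)\<^sup>2 = (resid x y (i 1) \<beta>1)\<^sup>2" by (rule tie)
      show "(resid x y (i 1) \<beta>1)\<^sup>2 = sq_resid_ord n x y h \<beta>1"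
        using s1a by (simp add: sqo w1_def)
      show "sq_resid_ord n x y h \<beta>1 = sq_resid_ord n x y (h+1) \<beta>1"
        using s1a s1b by (simp add: sqo)
    qed
    then show ?thesis using jM jrank by blast
  qed
  then obtain j where jM: "j \<in> M" and jr: "\<not> (x (i 1) \<in> V \<and> x j \<in> V)" and PQ: "?P \<longrightarrow> ?Q j"
    by blast
  obtain b where "sop b (x (i 1)) (x j) \<notin> V" using RK[OF jr] by blast
  then show ?thesis using rank jM PQ unfolding M_def I_def by blast
qed

end
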